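(* Let $G$ be a simple loopless graph on $[L]$ and $p\ge1$. The map $\Phi_p:\Pi_{2p}(G)\to\mathcal{P}_{2p}(G)$ is surjective.
   Context: $\mathcal{T}(G)=\langle v\in[L]: uv=vu \text{ for } (u,v)\in E(G)\rangle$ is the trace monoid of $G$, $e$ the empty word. Words are adjacent, $w_1\leftrightarrow w_2$, if $w_1=vw_2$ or $w_2=vw_1$ for a letter $v$. $\mathcal{P}_{2p}(G)=\{w\in\mathcal{T}(G)^{2p}: e\leftrightarrow w_1\leftrightarrow\cdots\leftrightarrow w_{2p}=e\}$. $P_2(2p)$ is the set of pair partitions of $[2p]$; blocks $\{u_1,v_1\},\{u_2,v_2\}$ cross if $u_1<u_2<v_1<v_2$; $F_\pi$ is the graph on the blocks of $\pi$ with edges between crossing blocks. $\Pi_{2p}(G)=\{(\pi,\phi):\pi\in P_2(2p),\ \phi\in\operatorname{Hom}(F_\pi,G)\}$. Definition of $\Phi_p$ (it takes values in $\mathcal{P}_{2p}(G)$): (1) For $p=1$, if $\phi$ assigns label $i$ to the block $\{1,2\}$, $\Phi_1(\pi,\phi)=(i,e)$. (2) Given $\Phi_p$ and $(\pi,\phi)\in\Pi_{2(p+1)}(G)$, let $r$ be the smallest index that is the larger element of its block, $U=\{s,r\}\in\pi$ with $s<r$, $i_s=\phi(U)$, $\sigma=\pi\setminus\{U\}$, $\psi=\phi|_\sigma$. Identify $P_2([2(p+1)]\setminus\{s,r\})$ with $P_2(2p)$ via the order-preserving bijection, write $u=\Phi_p(\sigma,\psi)=(u_k)_{k\in[2(p+1)]\setminus\{s,r\}}$,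 and let $u_{k^-}$ be $u_j$ for the largest $j<k$, $j\notin\{s,r\}$, or $e$ if none exists. Then $\Phi_{p+1}(\pi,\phi)_k=u_k$ for $k<s$; $i_su_{s^-}$ for $k=s$; $i_su_k$ for $s<k<r$; $u_{r^-}$ for $k=r$; $u_k$ for $k>r$. *)

theory Defs
  imports Main "HOL-Library.Disjoint_Sets"
begin

text \<open>Traces (elements of the trace monoid T(G)) are represented as equivalence classes
of words (lists of letters) under the congruence generated by uv = vu for E u v.\<close>

type_synonym trace = "nat list set"

definition tswap :: "(nat \<Rightarrow> nat \<Rightarrow> bool) \<Rightarrow> nat list \<Rightarrow> nat list \<Rightarrow> bool" where
  "tswap E xs ys \<longleftrightarrow> (\<exists>as bs u v. E u v \<and> xs = as @ [u, v] @ bs \<and> ys = as @ [v, u] @ bs)"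

definition tr_eq :: "(nat \<Rightarrow> nat \<Rightarrow> bool) \<Rightarrow> nat list \<Rightarrow> nat list \<Rightarrow> bool" where
  "tr_eq E = (sup (tswap E) (tswap E)\<inverse>\<inverse>)\<^sup>*\<^sup>*"

definition trace_of :: "(nat \<Rightarrow> nat \<Rightarrow> bool) \<Rightarrow> nat list \<Rightarrow> trace" where
  "trace_of E w = {w'. tr_eq E w w'}"

definition Tmon :: "nat \<Rightarrow> (nat \<Rightarrow> nat \<Rightarrow> bool) \<Rightarrow> trace set" where
  "Tmon L E = {trace_of E w | w. set w \<subseteq> {1..L}}"

definition temp :: "(nat \<Rightarrow> nat \<Rightarrow> bool) \<Rightarrow> trace" where
  "temp E = trace_of E []"

definition lmul :: "(nat \<Rightarrow> nat \<Rightarrow> bool) \<Rightarrow> nat \<Rightarrow> trace \<Rightarrow> trace" where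
  "lmul E v t = (\<Union>w\<in>t. trace_of E (v # w))"

definition tadj :: "nat \<Rightarrow> (nat \<Rightarrow> nat \<Rightarrow> bool) \<Rightarrow> trace \<Rightarrow> trace \<Rightarrow> bool" where
  "tadj L E t1 t2 \<longleftrightarrow> (\<exists>v\<in>{1..L}. t1 = lmul E v t2 \<or> t2 = lmul E v t1)"

text \<open>P_{2p}(G): tuples (w_1,...,w_{2p}) stored as a list ws with w_k = ws ! (k-1).\<close>
definition paths :: "nat \<Rightarrow> (nat \<Rightarrow> nat \<Rightarrow> bool) \<Rightarrow> nat \<Rightarrow> trace list set" where
  "paths L E p = {ws. length ws = 2 * p \<and> set ws \<subseteq> Tmon L E
      \<and> tadj L E (temp E) (ws ! 0)
      \<and> (\<forall>k. k + 1 < 2 * p \<longrightarrow> tadj L E (ws ! k) (ws ! (k + 1)))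
      \<and> ws ! (2 * p - 1) = temp E}"

definition pair_partition :: "nat set \<Rightarrow> nat set set \<Rightarrow> bool" where
  "pair_partition S \<pi> \<longleftrightarrow> partition_on S \<pi> \<and> (\<forall>B\<in>\<pi>. card B = 2)"

definition crosses :: "nat set \<Rightarrow> nat set \<Rightarrow> bool" where
  "crosses B C \<longleftrightarrow> (\<exists>u1 v1 u2 v2. B = {u1, v1} \<and> C = {u2, v2} \<and> u1 < u2 \<and> u2 < v1 \<and> v1 < v2)"

definition F_edge :: "nat set set \<Rightarrow> nat set \<Rightarrow> nat set \<Rightarrow> bool" where
  "F_edge \<pi> B C \<longleftrightarrow> B \<in> \<pi> \<and> C \<in> \<pi> \<and> (crosses B C \<or> crosses C B)"

definition is_hom :: "nat \<Rightarrow> (nat \<Rightarrow> nat \<Rightarrow> bool) \<Rightarrow> nat set set \<Rightarrow> (nat set \<Rightarrow> nat) \<Rightarrow> bool" where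
  "is_hom L E \<pi> \<phi> \<longleftrightarrow> (\<forall>B\<in>\<pi>. \<phi> B \<in> {1..L}) \<and> (\<forall>B C. F_edge \<pi> B C \<longrightarrow> E (\<phi> B) (\<phi> C))"

definition PiSet :: "nat \<Rightarrow> (nat \<Rightarrow> nat \<Rightarrow> bool) \<Rightarrow> nat \<Rightarrow> (nat set set \<times> (nat set \<Rightarrow> nat)) set" where
  "PiSet L E p = {(\<pi>, \<phi>). pair_partition {1..2 * p} \<pi> \<and> is_hom L E \<pi> \<phi>}"

text \<open>The map Phi, defined on pair partitions of an arbitrary finite index set (the
order-preserving identification of the paper), as a function from indices to traces.\<close>
fun PhiF :: "nat \<Rightarrow> (nat \<Rightarrow> nat \<Rightarrow> bool) \<Rightarrow> nat set set \<Rightarrow> (nat set \<Rightarrow> nat) \<Rightarrow> nat \<Rightarrow> trace" where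
  "PhiF 0 E \<pi> \<phi> = (\<lambda>k. temp E)"
| "PhiF (Suc p) E \<pi> \<phi> =
     (let r = Min {b. \<exists>a. a < b \<and> {a, b} \<in> \<pi>};
          s = (THE a. a < r \<and> {a, r} \<in> \<pi>);
          U = {s, r};
          \<sigma> = \<pi> - {U};
          u = PhiF p E \<sigma> \<phi>;
          S = \<Union>\<sigma>;
          prev = (\<lambda>k. if \<exists>j\<in>S. j < k then u (Max {j\<in>S. j < k}) else temp E);
          i = \<phi> U
      in (\<lambda>k. if k < s then u k
              else if k = s then lmul E i (prev s)
              else if k < r then lmul E i (u k)
              else if k = r then prev r
              else u k))"

definition Phi :: "nat \<Rightarrow> (nat \<Rightarrow> nat \<Rightarrow> bool) \<Rightarrow> nat set set \<Rightarrow> (nat set \<Rightarrow> nat) \<Rightarrow> trace list" where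
  "Phi p E \<pi> \<phi> = map (PhiF p E \<pi> \<phi>) [1..<2 * p + 1]"

end

theory Submission
  imports Defs "HOL-Library.Multiset"
begin

lemma tr_eq_refl[simp]: "tr_eq E w w"
  by (simp add: tr_eq_def)

lemma tr_eq_sym: "tr_eq E x y \<Longrightarrow> tr_eq E y x"
  unfolding tr_eq_def
proof (induction rule: rtranclp_induct)
  case base then show ?case by simp
next
  case (step y z)
  then show ?case by (auto intro: converse_rtranclp_into_rtranclp)
qed

lemma tr_eq_trans: "tr_eq E x y \<Longrightarrow> tr_eq E y z \<Longrightarrow> tr_eq E x z"
  unfolding tr_eq_def by (rule rtranclp_trans)

lemma tr_eq_step: "tswap E x y \<Longrightarrow> tr_eq E x y"
  unfolding tr_eq_def by (auto)

lemma trace_of_eq_iff: "trace_of E w = trace_of E w' \<longleftrightarrow> tr_eq E w w'"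
proof
  assume "trace_of E w = trace_of E w'"
  then have "w' \<in> trace_of E w" by (auto simp: trace_of_def)
  then show "tr_eq E w w'" by (simp add: trace_of_def)
next
  assume "tr_eq E w w'"
  then show "trace_of E w = trace_of E w'"
    by (auto simp: trace_of_def intro: tr_eq_trans tr_eq_sym)
qed

lemma tr_eq_append_left: "tr_eq E w w' \<Longrightarrow> tr_eq E (xs @ w) (xs @ w')"
  unfolding tr_eq_def
proof (induction rule: rtranclp_induct)
  case base then show ?case by simp
next
  case (step y z)
  have ts: "tswap E (xs @ a) (xs @ b)" if "tswap E a b" for a b
    using that unfolding tswap_def
    by (elim exE conjE) (rule_tac x="xs @ as" in exI, auto)
  have "tswap E (xs @ y) (xs @ z) \<or> tswap E (xs @ z) (xs @ y)"
    using step(2) ts by auto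
  then show ?case using step(3)
    by (auto intro: rtranclp.rtrancl_into_rtrancl)
qed

lemma tr_eq_Cons: "tr_eq E w w' \<Longrightarrow> tr_eq E (a # w) (a # w')"
  using tr_eq_append_left[of E w w' "[a]"] by simp

lemma lmul_trace: "lmul E v (trace_of E w) = trace_of E (v # w)"
proof -
  have "trace_of E (v # w') = trace_of E (v # w)" if "w' \<in> trace_of E w" for w'
  proof -
    have "tr_eq E w w'" using that by (simp add: trace_of_def)
    then show ?thesis by (simp add: trace_of_eq_iff tr_eq_Cons tr_eq_sym)
  qed
  moreover have "w \<in> trace_of E w" by (simp add: trace_of_def)
  ultimately show ?thesis unfolding lmul_def by blast
qed

lemma tr_eq_mset: "tr_eq E w w' \<Longrightarrow> mset w = mset w'"
  unfolding tr_eq_def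
proof (induction rule: rtranclp_induct)
  case base then show ?case by simp
next
  case (step y z)
  then show ?case by (auto simp: tswap_def)
qed

lemma tr_eq_length: "tr_eq E w w' \<Longrightarrow> length w = length w'"
  using tr_eq_mset by (metis size_mset)

lemma commute_past:
  assumes "symp E" "\<forall>y\<in>set xs. E i y"
  shows "tr_eq E (xs @ i # ys) (i # xs @ ys)"
  using assms(2)
proof (induction xs)
  case Nil then show ?case by simp
next
  case (Cons x xs)
  have 1: "tr_eq E (x # xs @ i # ys) (x # i # xs @ ys)"
    using Cons by (auto intro: tr_eq_Cons)
  have "E x i" using Cons(2) assms(1) by (auto dest: sympD)
  then have "tswap E (x # i # xs @ ys) (i # x # xs @ ys)"
    unfolding tswap_def by (rule_tac x="[]" in exI) auto
  then show ?case using 1 by (auto intro: tr_eq_trans tr_eq_step)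
qed

definition linv :: "(nat \<Rightarrow> nat \<Rightarrow> bool) \<Rightarrow> nat \<Rightarrow> nat list \<Rightarrow> nat list \<Rightarrow> bool" where
  "linv E i x v \<longleftrightarrow> i \<in> set v \<and> (\<forall>y\<in>set (takeWhile (\<lambda>z. z \<noteq> i) v). E i y)
     \<and> tr_eq E x (remove1 i v)"

lemma linv_step:
  assumes "irreflp E" "linv E i x v" "tswap E v v'"
  shows "linv E i x v'"
proof -
  obtain as bs a b where ab: "E a b" "v = as @ [a, b] @ bs" "v' = as @ [b, a] @ bs"
    using assms(3) unfolding tswap_def by blast
  have neq: "a \<noteq> b" using ab(1) assms(1) by (auto dest: irreflpD)
  have sw: "\<And>cs ds. tr_eq E (cs @ a # b # ds) (cs @ b # a # ds)"
    using ab(1) by (intro tr_eq_step) (auto simp: tswap_def)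
  show ?thesis
  proof (cases "i \<in> set as")
    case True
    then show ?thesis using assms(2) ab sw
      by (auto simp: linv_def takeWhile_append1 remove1_append intro: tr_eq_trans)
  next
    case False
    then have tw: "\<And>cs. takeWhile (\<lambda>z. z \<noteq> i) (as @ cs) = as @ takeWhile (\<lambda>z. z \<noteq> i) cs"
      by (induction as) auto
    have rm: "\<And>cs. remove1 i (as @ cs) = as @ remove1 i cs"
      using False by (simp add: remove1_append)
    show ?thesis
    proof (cases "a = i")
      case True
      then show ?thesis using assms(2) ab neq tw rm by (auto simp: linv_def)
    next
      case a: False
      show ?thesis
      proof (cases "b = i")
        case True
        then show ?thesis using assms(2) ab neq tw rm a by (auto simp: linv_def)
      next
        case False
        then show ?thesis using assms(2) ab neq tw rm a sw[of "as" "remove1 i bs"]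
          by (auto simp: linv_def intro: tr_eq_trans)
      qed
    qed
  qed
qed

lemma levi_word:
  assumes "symp E" "irreflp E" "tr_eq E (i # x) v"
  shows "\<exists>xs ys. v = xs @ i # ys \<and> (\<forall>y\<in>set xs. E i y) \<and> tr_eq E x (xs @ ys)"
proof -
  have "linv E i x v"
    using assms(3) unfolding tr_eq_def
  proof (induction rule: rtranclp_induct)
    case base then show ?case by (simp add: linv_def)
  next
    case (step y z)
    have "tswap E y z"
      using step(2) sympD[OF assms(1)] unfolding tswap_def by blast
    then show ?case using linv_step[OF assms(2) step(3)] by blast
  qed
  then have iv: "i \<in> set v" "\<forall>y\<in>set (takeWhile (\<lambda>z. z \<noteq> i) v). E i y" "tr_eq E x (remove1 i v)"
    by (auto simp: linv_def)
  obtain xs ys where v: "v = xs @ i # ys" "i \<notin> set xs"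
    using split_list_first[OF iv(1)] by blast
  have "takeWhile (\<lambda>z. z \<noteq> i) v = xs" using v by (induction xs arbitrary: v) auto
  moreover have "remove1 i v = xs @ ys" using v by (simp add: remove1_append)
  ultimately show ?thesis using iv v by auto
qed


definition istr :: "(nat \<Rightarrow> nat \<Rightarrow> bool) \<Rightarrow> trace \<Rightarrow> bool" where
  "istr E t \<longleftrightarrow> (\<exists>w. t = trace_of E w)"

lemma istr_temp[simp]: "istr E (temp E)"
  by (auto simp: istr_def temp_def)

lemma istr_lmul[simp]: "istr E t \<Longrightarrow> istr E (lmul E v t)"
  by (auto simp: istr_def lmul_trace)

lemma istr_Tmon: "t \<in> Tmon L E \<Longrightarrow> istr E t"
  by (auto simp: istr_def Tmon_def)

lemma lcancel:
  assumes "symp E" "irreflp E" "istr E x" "istr E y" "lmul E i x = lmul E i y"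
  shows "x = y"
proof -
  obtain xw yw where xy: "x = trace_of E xw" "y = trace_of E yw"
    using assms(3,4) by (auto simp: istr_def)
  have "tr_eq E (i # xw) (i # yw)" using assms(5) xy by (simp add: lmul_trace trace_of_eq_iff)
  then obtain xs ys where d: "i # yw = xs @ i # ys" "\<forall>y\<in>set xs. E i y" "tr_eq E xw (xs @ ys)"
    using levi_word[OF assms(1,2)] by blast
  have "xs = []"
  proof (rule ccontr)
    assume "xs \<noteq> []"
    then obtain z zs where "xs = z # zs" by (cases xs) auto
    then show False using d(1,2) assms(2) by (auto dest: irreflpD)
  qed
  then show ?thesis using d xy by (simp add: trace_of_eq_iff)
qed

lemma letter_cancel:
  assumes "istr E t" "lmul E a t = lmul E b t"
  shows "a = b"
proof -
  obtain w where "t = trace_of E w" using assms(1) by (auto simp: istr_def)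
  then have "tr_eq E (a # w) (b # w)" using assms(2) by (simp add: lmul_trace trace_of_eq_iff)
  then have "mset (a # w) = mset (b # w)" by (rule tr_eq_mset)
  then show ?thesis by simp
qed

lemma levi:
  assumes "symp E" "irreflp E" "istr E t" "istr E x" "lmul E a t = lmul E i x" "a \<noteq> i"
  shows "E a i \<and> (\<exists>y. istr E y \<and> t = lmul E i y \<and> x = lmul E a y)"
proof -
  obtain tw xw where tx: "t = trace_of E tw" "x = trace_of E xw"
    using assms(3,4) by (auto simp: istr_def)
  have "tr_eq E (i # xw) (a # tw)" using assms(5) tx
    by (simp add: lmul_trace trace_of_eq_iff tr_eq_sym)
  then obtain xs ys where d: "a # tw = xs @ i # ys" "\<forall>y\<in>set xs. E i y" "tr_eq E xw (xs @ ys)"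
    using levi_word[OF assms(1,2)] by blast
  obtain xs' where xs: "xs = a # xs'" using d(1) assms(6) by (cases xs) auto
  have tw: "tw = xs' @ i # ys" using d(1) xs by simp
  have Eia: "E i a" using d(2) xs by simp
  have "tr_eq E tw (i # xs' @ ys)" using tw d(2) xs commute_past[OF assms(1), of xs' i ys] by simp
  then have 1: "t = lmul E i (trace_of E (xs' @ ys))"
    using tx by (simp add: lmul_trace trace_of_eq_iff)
  have 2: "x = lmul E a (trace_of E (xs' @ ys))"
    using tx d(3) xs by (simp add: lmul_trace trace_of_eq_iff)
  show ?thesis using 1 2 Eia assms(1) by (auto simp: istr_def dest: sympD)
qed

lemma lmul_ne_temp:
  assumes "istr E t" shows "lmul E v t \<noteq> temp E"
proof
  assume "lmul E v t = temp E"
  moreover obtain w where "t = trace_of E w" using assms by (auto simp: istr_def)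
  ultimately have "tr_eq E (v # w) []" by (simp add: lmul_trace trace_of_eq_iff temp_def)
  then show False using tr_eq_length by fastforce
qed

lemma not_asc_desc:
  assumes "istr E t" "istr E t'" "t = lmul E a t'" "t' = lmul E b t"
  shows False
proof -
  obtain w w' where w: "t = trace_of E w" "t' = trace_of E w'" using assms(1,2) by (auto simp: istr_def)
  have "trace_of E w = trace_of E (a # w')" "trace_of E w' = trace_of E (b # w)"
    using assms(3,4) w lmul_trace by metis+
  then have "tr_eq E w (a # w')" "tr_eq E w' (b # w)" by (simp_all add: trace_of_eq_iff)
  then have "length w = Suc (length w')" "length w' = Suc (length w)"
    by (auto dest!: tr_eq_length)
  then show False by simp
qed


definition prv :: "(nat \<Rightarrow> nat \<Rightarrow> bool) \<Rightarrow> nat set \<Rightarrow> (nat \<Rightarrow> trace) \<Rightarrow> nat \<Rightarrow> trace" where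
  "prv E S w k = (if \<exists>j\<in>S. j < k then w (Max {j\<in>S. j < k}) else temp E)"

lemma prv_pred:
  assumes "finite S" "j \<in> S" "j < k" "\<forall>m\<in>S. m < k \<longrightarrow> m \<le> j"
  shows "prv E S w k = w j"
proof -
  have "Max {j\<in>S. j < k} = j"
    using assms by (intro Max_eqI) auto
  then show ?thesis using assms by (auto simp: prv_def)
qed

lemma prv_none:
  assumes "\<forall>m\<in>S. \<not> m < k"
  shows "prv E S w k = temp E"
  using assms by (auto simp: prv_def)

lemma pred_exists:
  fixes S :: "nat set"
  assumes "finite S" "\<exists>j\<in>S. j < k"
  shows "\<exists>j\<in>S. j < k \<and> (\<forall>m\<in>S. m < k \<longrightarrow> m \<le> j)"
proof -
  have f: "finite {j\<in>S. j < k}" "{j\<in>S. j < k} \<noteq> {}" using assms by auto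
  show ?thesis
    using Max_in[OF f] Max_ge[OF f(1)] by (intro bexI[of _ "Max {j\<in>S. j < k}"]) auto
qed

lemma prv_cong:
  assumes "finite S" "\<forall>j\<in>S. f j = g j"
  shows "prv E S f k = prv E S g k"
proof (cases "\<exists>j\<in>S. j < k")
  case True
  then obtain j where "j\<in>S" "j < k" "\<forall>m\<in>S. m < k \<longrightarrow> m \<le> j" using pred_exists[OF assms(1)] by blast
  then show ?thesis using prv_pred[OF assms(1)] assms(2) by metis
next
  case False
  then show ?thesis by (simp add: prv_none)
qed

lemma istr_prv:
  assumes "finite S" "\<forall>k\<in>S. istr E (w k)"
  shows "istr E (prv E S w k)"
proof (cases "\<exists>j\<in>S. j < k")
  case True
  then obtain j where "j\<in>S" "j < k" "\<forall>m\<in>S. m < k \<longrightarrow> m \<le> j" using pred_exists[OF assms(1)] by blast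
  then show ?thesis using prv_pred[OF assms(1)] assms(2) by metis
next
  case False
  then show ?thesis by (simp add: prv_none)
qed

definition gpath :: "nat \<Rightarrow> (nat \<Rightarrow> nat \<Rightarrow> bool) \<Rightarrow> nat set \<Rightarrow> (nat \<Rightarrow> trace) \<Rightarrow> bool" where
  "gpath L E S w \<longleftrightarrow> finite S \<and> (\<forall>k\<in>S. istr E (w k)) \<and> (\<forall>k\<in>S. tadj L E (prv E S w k) (w k))
     \<and> (S \<noteq> {} \<longrightarrow> w (Max S) = temp E)"

lemma stageA:
  assumes E: "symp E" "irreflp E" and g: "gpath L E S w" and ne: "S \<noteq> {}"
  obtains r i s where "r \<in> S" "i \<in> {1..L}" "prv E S w r = lmul E i (w r)"
    "\<forall>k\<in>S. k < r \<longrightarrow> (\<exists>a\<in>{1..L}. w k = lmul E a (prv E S w k))"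
    "s \<in> S" "s < r" "w s = lmul E i (prv E S w s)"
    "\<forall>k\<in>S. s < k \<and> k < r \<longrightarrow> w k \<noteq> lmul E i (prv E S w k)"
    "\<forall>k\<in>S. s < k \<and> k < r \<longrightarrow> (\<exists>y. istr E y \<and> w k = lmul E i y)"
proof -
  have fin: "finite S" and istw: "\<forall>k\<in>S. istr E (w k)" and ad: "\<forall>k\<in>S. tadj L E (prv E S w k) (w k)"
    and en: "w (Max S) = temp E"
    using g ne by (auto simp: gpath_def)
  have istp: "\<And>k. istr E (prv E S w k)" using istr_prv[OF fin istw] .
  define D where "D = {k\<in>S. \<exists>v\<in>{1..L}. prv E S w k = lmul E v (w k)}"
  have asc_or: "\<And>k. k \<in> S \<Longrightarrow> k \<notin> D \<Longrightarrow> \<exists>a\<in>{1..L}. w k = lmul E a (prv E S w k)"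
    using ad unfolding D_def tadj_def by blast
  have "D \<noteq> {}"
  proof
    assume "D = {}"
    then obtain a where "w (Max S) = lmul E a (prv E S w (Max S))"
      using asc_or[of "Max S"] Max_in[OF fin ne] by blast
    then show False using en lmul_ne_temp[OF istp] by metis
  qed
  have finD: "finite D" using fin by (simp add: D_def)
  define r where "r = Min D"
  have rD: "r \<in> D" using Min_in[OF finD \<open>D \<noteq> {}\<close>] r_def by simp
  then have rS: "r \<in> S" by (simp add: D_def)
  obtain i where i: "i \<in> {1..L}" "prv E S w r = lmul E i (w r)" using rD by (auto simp: D_def)
  have below: "\<forall>k\<in>S. k < r \<longrightarrow> (\<exists>a\<in>{1..L}. w k = lmul E a (prv E S w k))"
  proof (intro ballI impI)
    fix k assume "k \<in> S" "k < r"
    then have "k \<notin> D" using Min_le[OF finD] r_def by fastforce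
    then show "\<exists>a\<in>{1..L}. w k = lmul E a (prv E S w k)" using asc_or \<open>k\<in>S\<close> by blast
  qed
  have exr: "\<exists>j\<in>S. j < r"
  proof (rule ccontr)
    assume "\<not> (\<exists>j\<in>S. j < r)"
    then have "prv E S w r = temp E" by (simp add: prv_none)
    then show False using i(2) lmul_ne_temp istw rS by metis
  qed
  define T where "T = {k\<in>S. k < r \<and> w k = lmul E i (prv E S w k)}"
  have down: "\<forall>k\<in>S. k < r \<longrightarrow> (\<forall>j\<in>S. k < j \<and> j < r \<longrightarrow> j \<notin> T) \<longrightarrow> (\<exists>y. istr E y \<and> w k = lmul E i y)"
  proof -
    have "\<forall>k. r - k = n \<longrightarrow> k \<in> S \<longrightarrow> k < r \<longrightarrow> (\<forall>j\<in>S. k < j \<and> j < r \<longrightarrow> j \<notin> T) \<longrightarrow> (\<exists>y. istr E y \<and> w k = lmul E i y)" for n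
    proof (induction n rule: less_induct)
      case (less n)
      show ?case
      proof (intro allI impI)
        fix k assume k: "r - k = n" "k \<in> S" "k < r" "\<forall>j\<in>S. k < j \<and> j < r \<longrightarrow> j \<notin> T"
        show "\<exists>y. istr E y \<and> w k = lmul E i y"
        proof (cases "\<exists>j\<in>S. k < j \<and> j < r")
          case False
          then have "prv E S w r = w k" using k by (intro prv_pred[OF fin]) auto
          then show ?thesis using i(2) istw rS by auto
        next
          case True
          define A where "A = {j\<in>S. k < j \<and> j < r}"
          have fA: "finite A" "A \<noteq> {}" using fin True by (auto simp: A_def)
          define kp where "kp = Min A"
          have kpA: "kp \<in> A" using Min_in[OF fA] kp_def by simp
          have kpmin: "\<forall>m\<in>A. kp \<le> m" using Min_le[OF fA(1)] kp_def by simp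
          have kp: "kp \<in> S" "k < kp" "kp < r" using kpA by (auto simp: A_def)
          have "\<exists>y. istr E y \<and> w kp = lmul E i y"
            using less.IH[of "r - kp"] k kp by auto
          then obtain y where y: "istr E y" "w kp = lmul E i y" by blast
          have "\<forall>m\<in>S. m < kp \<longrightarrow> m \<le> k"
          proof (intro ballI impI)
            fix m assume m: "m \<in> S" "m < kp"
            show "m \<le> k"
            proof (rule ccontr)
              assume "\<not> m \<le> k"
              then have "m \<in> A" using m kp(3) by (auto simp: A_def)
              then show False using kpmin m by fastforce
            qed
          qed
          then have pk: "prv E S w kp = w k" by (rule prv_pred[OF fin k(2) kp(2)])
          obtain a where a: "a \<in> {1..L}" "w kp = lmul E a (prv E S w kp)" using below kp by blast
          have "a \<noteq> i" using a k(4) kp by (auto simp: T_def)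
          then have "\<exists>y'. istr E y' \<and> w k = lmul E i y'"
            using levi[OF E, of "w k" y a i] a(2) y pk istw k(2) by auto
          then show ?thesis by blast
        qed
      qed
    qed
    then show ?thesis by blast
  qed
  have "T \<noteq> {}"
  proof
    assume T: "T = {}"
    define k0 where "k0 = Min S"
    have k0: "k0 \<in> S" "\<forall>m\<in>S. k0 \<le> m" using Min_in[OF fin ne] Min_le[OF fin] k0_def by auto
    have "k0 < r" using exr k0 by fastforce
    then obtain y where y: "istr E y" "w k0 = lmul E i y" using down T k0 by blast
    have p0: "prv E S w k0 = temp E" using k0 by (intro prv_none) auto
    obtain a where a: "w k0 = lmul E a (temp E)" using below k0 \<open>k0 < r\<close> p0 by metis
    have "a \<noteq> i" using a T k0 \<open>k0 < r\<close> p0 by (auto simp: T_def)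
    then obtain y' where "istr E y'" "temp E = lmul E i y'"
      using levi[OF E, of "temp E" y a i] a y by auto
    then show False using lmul_ne_temp by metis
  qed
  have finT: "finite T" using fin by (simp add: T_def)
  define s where "s = Max T"
  have sT: "s \<in> T" using Max_in[OF finT \<open>T \<noteq> {}\<close>] s_def by simp
  have smax: "\<forall>m\<in>T. m \<le> s" using Max_ge[OF finT] s_def by simp
  show ?thesis
  proof (rule that[of r i s])
    show "\<forall>k\<in>S. s < k \<and> k < r \<longrightarrow> w k \<noteq> lmul E i (prv E S w k)"
      using smax by (auto simp: T_def)
    show "\<forall>k\<in>S. s < k \<and> k < r \<longrightarrow> (\<exists>y. istr E y \<and> w k = lmul E i y)"
      using down smax by (meson less_trans not_le)
  qed (use rS i below sT in \<open>auto simp: T_def\<close>)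
qed


definition good :: "nat \<Rightarrow> (nat \<Rightarrow> nat \<Rightarrow> bool) \<Rightarrow> nat \<Rightarrow> nat set \<Rightarrow> (nat \<Rightarrow> trace)
    \<Rightarrow> nat set set \<Rightarrow> (nat set \<Rightarrow> nat) \<Rightarrow> bool" where
  "good L E p S w \<pi> \<psi> \<longleftrightarrow> pair_partition S \<pi> \<and> is_hom L E \<pi> \<psi>
    \<and> (\<forall>\<phi>. (\<forall>B\<in>\<pi>. \<phi> B = \<psi> B) \<longrightarrow> (\<forall>k\<in>S. PhiF p E \<pi> \<phi> k = w k))
    \<and> (\<forall>a b. a < b \<and> {a, b} \<in> \<pi> \<longrightarrow> w a = lmul E (\<psi> {a, b}) (prv E S w a)
          \<and> prv E S w b = lmul E (\<psi> {a, b}) (w b))"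

lemma prv_same:
  assumes "{m\<in>S. m < k} = {m\<in>S. m < k'}"
  shows "prv E S w k = prv E S w k'"
  using assms unfolding prv_def by (metis (no_types, lifting) mem_Collect_eq)

lemma PhiF_Suc_conc:
  assumes "Min {b. \<exists>a. a < b \<and> {a, b} \<in> \<pi>} = r" "(THE a. a < r \<and> {a, r} \<in> \<pi>) = s"
  shows "PhiF (Suc p) E \<pi> \<phi> k = (let \<sigma> = \<pi> - {{s, r}}; u = PhiF p E \<sigma> \<phi>; i = \<phi> {s, r} in
     if k < s then u k else if k = s then lmul E i (prv E (\<Union>\<sigma>) u s)
     else if k < r then lmul E i (u k) else if k = r then prv E (\<Union>\<sigma>) u r else u k)"
  using assms by (simp add: Let_def prv_def)

lemma step:
  assumes E: "symp E" "irreflp E" and g: "gpath L E S w" and card: "card S = 2 * Suc p"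
    and IH: "\<And>S' u. gpath L E S' u \<Longrightarrow> card S' = 2 * p \<Longrightarrow> \<exists>\<pi> \<psi>. good L E p S' u \<pi> \<psi>"
  shows "\<exists>\<pi> \<psi>. good L E (Suc p) S w \<pi> \<psi>"
proof -
  have fin: "finite S" and istw: "\<forall>k\<in>S. istr E (w k)" and ad: "\<forall>k\<in>S. tadj L E (prv E S w k) (w k)"
    using g by (auto simp: gpath_def)
  have ne: "S \<noteq> {}" using card by auto
  have en: "w (Max S) = temp E" using g ne by (auto simp: gpath_def)
  have istp: "\<And>k. istr E (prv E S w k)" using istr_prv[OF fin istw] .
  obtain r i s where rS: "r \<in> S" and i: "i \<in> {1..L}" "prv E S w r = lmul E i (w r)"
    and below: "\<forall>k\<in>S. k < r \<longrightarrow> (\<exists>a\<in>{1..L}. w k = lmul E a (prv E S w k))"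
    and sS: "s \<in> S" "s < r" "w s = lmul E i (prv E S w s)"
    and noti: "\<forall>k\<in>S. s < k \<and> k < r \<longrightarrow> w k \<noteq> lmul E i (prv E S w k)"
    and exy: "\<forall>k\<in>S. s < k \<and> k < r \<longrightarrow> (\<exists>y. istr E y \<and> w k = lmul E i y)"
    by (rule stageA[OF E g ne])
  define X where "X k = (if k = s then prv E S w s else (THE y. istr E y \<and> w k = lmul E i y))" for k
  have X1: "\<forall>k\<in>S. s \<le> k \<and> k < r \<longrightarrow> istr E (X k) \<and> w k = lmul E i (X k)"
  proof (intro ballI impI)
    fix k assume k: "k \<in> S" "s \<le> k \<and> k < r"
    show "istr E (X k) \<and> w k = lmul E i (X k)"
    proof (cases "k = s")
      case True then show ?thesis using sS istp by (simp add: X_def)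
    next
      case False
      then have "\<exists>!y. istr E y \<and> w k = lmul E i y"
        using exy k lcancel[OF E] by (metis le_neq_implies_less)
      then show ?thesis using False theI'[of "\<lambda>y. istr E y \<and> w k = lmul E i y"] by (simp add: X_def)
    qed
  qed
  have X2: "\<forall>k\<in>S. s < k \<and> k < r \<longrightarrow> (\<forall>j\<in>S. j < k \<and> (\<forall>m\<in>S. m < k \<longrightarrow> m \<le> j) \<longrightarrow>
      (\<exists>a\<in>{1..L}. E a i \<and> X k = lmul E a (X j) \<and> w k = lmul E a (w j)))"
  proof (intro ballI impI)
    fix k j assume k: "k \<in> S" "s < k \<and> k < r" and j: "j \<in> S" "j < k \<and> (\<forall>m\<in>S. m < k \<longrightarrow> m \<le> j)"
    have sj: "s \<le> j" using j sS k by auto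
    have pk: "prv E S w k = w j" using j by (intro prv_pred[OF fin]) auto
    obtain a where a: "a \<in> {1..L}" "w k = lmul E a (w j)" using below k pk by auto
    have ai: "a \<noteq> i" using noti k a pk by auto
    have xj: "istr E (X j)" "w j = lmul E i (X j)" using X1 j sj k by auto
    have xk: "istr E (X k)" "w k = lmul E i (X k)" using X1 k by auto
    obtain y where y: "E a i" "istr E y" "w j = lmul E i y" "X k = lmul E a y"
      using levi[OF E, of "w j" "X k" a i] a(2) xk ai istw j(1) by auto
    have "y = X j" using lcancel[OF E y(2) xj(1), of i] y(3) xj(2) by argo
    then show "\<exists>a\<in>{1..L}. E a i \<and> X k = lmul E a (X j) \<and> w k = lmul E a (w j)"
      using a y by auto
  qed
  obtain rm where rm: "rm \<in> S" "rm < r" "\<forall>m\<in>S. m < r \<longrightarrow> m \<le> rm"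
    using pred_exists[OF fin, of r] sS by auto
  have srm: "s \<le> rm" using rm sS by auto
  have X3: "X rm = w r"
  proof -
    have "w rm = lmul E i (w r)" using i(2) rm by (simp add: prv_pred[OF fin])
    moreover have "istr E (X rm)" "w rm = lmul E i (X rm)" using X1 rm srm by auto
    ultimately show ?thesis using lcancel[OF E] istw rS by metis
  qed
  define S' where "S' = S - {s, r}"
  define u where "u k = (if s < k \<and> k < r then X k else w k)" for k
  have finS': "finite S'" using fin by (simp add: S'_def)
  have cardS': "card S' = 2 * p" using card sS rS by (simp add: S'_def card_Diff_subset)
  have U1: "\<forall>k. k \<le> s \<longrightarrow> prv E S' u k = prv E S w k"
  proof (intro allI impI)
    fix k assume k: "k \<le> s"
    show "prv E S' u k = prv E S w k"
    proof (cases "\<exists>j\<in>S. j < k")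
      case True
      then obtain j where j: "j \<in> S" "j < k" "\<forall>m\<in>S. m < k \<longrightarrow> m \<le> j" using pred_exists[OF fin] by blast
      have "prv E S' u k = u j" using j k sS by (intro prv_pred[OF finS']) (auto simp: S'_def)
      moreover have "prv E S w k = w j" using j by (intro prv_pred[OF fin]) auto
      ultimately show ?thesis using j k by (simp add: u_def)
    next
      case False
      then show ?thesis by (auto simp: prv_none S'_def)
    qed
  qed
  have U2: "\<forall>k. s < k \<and> k \<le> r \<longrightarrow> (\<forall>j\<in>S. j < k \<and> (\<forall>m\<in>S. m < k \<longrightarrow> m \<le> j) \<longrightarrow> prv E S' u k = X j)"
  proof (intro allI impI ballI)
    fix k j assume k: "s < k \<and> k \<le> r" and j: "j \<in> S" "j < k \<and> (\<forall>m\<in>S. m < k \<longrightarrow> m \<le> j)"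
    have sj: "s \<le> j" using j sS k by auto
    show "prv E S' u k = X j"
    proof (cases "j = s")
      case False
      then have "prv E S' u k = u j" using j k sj by (intro prv_pred[OF finS']) (auto simp: S'_def)
      then show ?thesis using False sj j k by (simp add: u_def)
    next
      case True
      show ?thesis
      proof (cases "\<exists>m\<in>S'. m < k")
        case True
        then obtain j' where j': "j' \<in> S'" "j' < k" "\<forall>m\<in>S'. m < k \<longrightarrow> m \<le> j'" using pred_exists[OF finS'] by blast
        have j's: "j' < s" using j' j \<open>j = s\<close> by (auto simp: S'_def)
        have "prv E S w s = w j'"
          using j' j's k sS by (intro prv_pred[OF fin]) (auto simp: S'_def)
        moreover have "prv E S' u k = u j'" using j' by (intro prv_pred[OF finS']) auto
        ultimately show ?thesis using j's \<open>j = s\<close> by (simp add: u_def X_def)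
      next
        case False
        have "\<forall>m\<in>S. \<not> m < s"
        proof (intro ballI notI)
          fix m assume m: "m \<in> S" "m < s"
          then have "m \<in> S'" "m < k" using sS(2) k by (auto simp: S'_def)
          then show False using False by blast
        qed
        then show ?thesis using False \<open>j = s\<close> by (simp add: prv_none X_def)
      qed
    qed
  qed
  have U2r: "prv E S' u r = w r" using U2 sS rm X3 by auto
  have U3: "\<forall>k. r < k \<longrightarrow> prv E S' u k = prv E S w k"
  proof (intro allI impI)
    fix k assume k: "r < k"
    obtain j where j: "j \<in> S" "j < k" "\<forall>m\<in>S. m < k \<longrightarrow> m \<le> j" using pred_exists[OF fin, of k] rS k by blast
    have rj: "r \<le> j" using j rS k by auto
    have pk: "prv E S w k = w j" using j by (intro prv_pred[OF fin]) auto
    show "prv E S' u k = prv E S w k"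
    proof (cases "j = r")
      case False
      then have "prv E S' u k = u j" using j rj sS by (intro prv_pred[OF finS']) (auto simp: S'_def)
      then show ?thesis using pk rj False by (simp add: u_def)
    next
      case True
      have "{m\<in>S'. m < k} = {m\<in>S'. m < r}" using j True by (auto simp: S'_def)
      then have "prv E S' u k = prv E S' u r" by (rule prv_same)
      then show ?thesis using U2r pk True by simp
    qed
  qed
  have istu: "\<forall>k\<in>S'. istr E (u k)"
    using X1 istw by (auto simp: u_def S'_def)
  have adu: "\<forall>k\<in>S'. tadj L E (prv E S' u k) (u k)"
  proof
    fix k assume k: "k \<in> S'"
    have kS: "k \<in> S" "k \<noteq> s" "k \<noteq> r" using k by (auto simp: S'_def)
    consider "k < s" | "s < k \<and> k < r" | "r < k" using kS by linarith
    then show "tadj L E (prv E S' u k) (u k)"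
    proof cases
      case 1
      then show ?thesis using U1 ad kS sS by (simp add: u_def)
    next
      case 2
      obtain j where j: "j \<in> S" "j < k" "\<forall>m\<in>S. m < k \<longrightarrow> m \<le> j"
        using pred_exists[OF fin, of k] sS 2 by blast
      obtain a where a: "a \<in> {1..L}" "X k = lmul E a (X j)" using X2 kS 2 j by blast
      have "prv E S' u k = X j" using U2 2 j by auto
      then show ?thesis using a 2 by (auto simp: tadj_def u_def)
    next
      case 3
      then show ?thesis using U3 ad kS sS by (simp add: u_def)
    qed
  qed
  have enu: "u (Max S') = temp E" if ne': "S' \<noteq> {}"
  proof -
    have "\<exists>m\<in>S. r < m"
    proof (rule ccontr)
      assume "\<not> (\<exists>m\<in>S. r < m)"
      then have "Max S = r" using rS fin by (intro Max_eqI) auto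
      then have wr: "w r = temp E" using en by simp
      obtain m where m: "m \<in> S'" using ne' by blast
      have mr: "m < r" "m \<in> S" "m \<noteq> s" "m \<noteq> r" using m \<open>\<not> (\<exists>m\<in>S. r < m)\<close> by (auto simp: S'_def)
      show False
      proof (cases "rm = s")
        case False
        then have "s < rm" using srm by simp
        obtain j where j: "j \<in> S" "j < rm" "\<forall>m\<in>S. m < rm \<longrightarrow> m \<le> j"
          using pred_exists[OF fin, of rm] sS \<open>s < rm\<close> by blast
        obtain a where a: "X rm = lmul E a (X j)" using X2 rm \<open>s < rm\<close> j by blast
        have "s \<le> j" using j sS(1) \<open>s < rm\<close> by auto
        have "j < r" using j rm by simp
        have "istr E (X j)" using X1 j(1) \<open>s \<le> j\<close> \<open>j < r\<close> by blast
        then show False using lmul_ne_temp[OF \<open>istr E (X j)\<close>, of a] a X3 wr by simp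
      next
        case True
        have "m \<le> rm" using rm(3) mr by blast
        then have "m < s" using mr True by simp
        obtain j where j: "j \<in> S" "j < s" "\<forall>m\<in>S. m < s \<longrightarrow> m \<le> j"
          using pred_exists[OF fin, of s] mr \<open>m < s\<close> by blast
        have "prv E S w s = w j" using j by (intro prv_pred[OF fin]) auto
        then have wj: "w j = temp E" using X3 True wr by (simp add: X_def)
        have "j < r" using j sS by simp
        obtain a where "w j = lmul E a (prv E S w j)" using below j(1) \<open>j < r\<close> by blast
        then show False using wj using lmul_ne_temp[OF istp, of a j] by simp
      qed
    qed
    then obtain m where m: "m \<in> S" "r < m" by blast
    have "Max S \<in> S" "\<forall>x\<in>S. x \<le> Max S" using Max_in[OF fin ne] Max_ge[OF fin] by auto
    then have rM: "r < Max S" using m by (meson less_le_trans)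
    then have "Max S' = Max S" using \<open>Max S \<in> S\<close> \<open>\<forall>x\<in>S. x \<le> Max S\<close> sS finS'
      by (intro Max_eqI) (auto simp: S'_def)
    then show ?thesis using rM en by (simp add: u_def)
  qed
  have gS': "gpath L E S' u"
    using finS' istu adu enu by (simp add: gpath_def)
  obtain \<sigma> \<psi> where gd: "good L E p S' u \<sigma> \<psi>" using IH[OF gS' cardS'] by blast
  have pp: "pair_partition S' \<sigma>" and hom: "is_hom L E \<sigma> \<psi>"
    and phi: "\<forall>\<phi>. (\<forall>B\<in>\<sigma>. \<phi> B = \<psi> B) \<longrightarrow> (\<forall>k\<in>S'. PhiF p E \<sigma> \<phi> k = u k)"
    and inv: "\<forall>a b. a < b \<and> {a, b} \<in> \<sigma> \<longrightarrow> u a = lmul E (\<psi> {a, b}) (prv E S' u a)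
          \<and> prv E S' u b = lmul E (\<psi> {a, b}) (u b)"
    using gd by (auto simp: good_def)
  have Un: "\<Union>\<sigma> = S'" using pp by (auto simp: pair_partition_def partition_on_def)
  have inS': "\<And>a b. {a, b} \<in> \<sigma> \<Longrightarrow> a \<in> S' \<and> b \<in> S'" using Un by blast
  have closers: "\<forall>a b. a < b \<and> {a, b} \<in> \<sigma> \<longrightarrow> r < b"
  proof (intro allI impI)
    fix a b assume ab: "a < b \<and> {a, b} \<in> \<sigma>"
    have b: "b \<in> S" "b \<noteq> s" "b \<noteq> r" using inS'[of a b] ab by (auto simp: S'_def)
    have d: "prv E S' u b = lmul E (\<psi> {a, b}) (u b)" using inv ab by blast
    show "r < b"
    proof (rule ccontr)
      assume "\<not> r < b"
      then have "b < r" using b by simp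
      consider "b < s" | "s < b" using b by linarith
      then show False
      proof cases
        case 1
        obtain c where c: "w b = lmul E c (prv E S w b)" using below b \<open>b < r\<close> by blast
        have "prv E S' u b = prv E S w b" using U1 1 by simp
        moreover have "u b = w b" using 1 by (simp add: u_def)
        ultimately show False using not_asc_desc[OF _ _ c] istw b istp d by metis
      next
        case 2
        obtain j where j: "j \<in> S" "j < b" "\<forall>m\<in>S. m < b \<longrightarrow> m \<le> j"
          using pred_exists[OF fin, of b] sS 2 by blast
        obtain c where c: "X b = lmul E c (X j)" using X2 b 2 \<open>b < r\<close> j by blast
        have pj: "prv E S' u b = X j" using U2 2 \<open>b < r\<close> j by auto
        have ub: "u b = X b" using 2 \<open>b < r\<close> by (simp add: u_def)
        have "s \<le> j" using j sS 2 by auto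
        then have "istr E (X j)" "istr E (X b)" using X1 j b 2 \<open>b < r\<close> by auto
        then show False using not_asc_desc[OF _ _ c] d pj ub by metis
      qed
    qed
  qed
  have openers: "\<forall>a b. a < b \<and> {a, b} \<in> \<sigma> \<and> s < a \<and> a < r \<longrightarrow>
      w a = lmul E (\<psi> {a, b}) (prv E S w a) \<and> E i (\<psi> {a, b})"
  proof (intro allI impI)
    fix a b assume ab: "a < b \<and> {a, b} \<in> \<sigma> \<and> s < a \<and> a < r"
    have aS: "a \<in> S" using inS'[of a b] ab by (auto simp: S'_def)
    obtain j where j: "j \<in> S" "j < a" "\<forall>m\<in>S. m < a \<longrightarrow> m \<le> j"
      using pred_exists[OF fin, of a] sS ab by blast
    obtain c where c: "E c i" "X a = lmul E c (X j)" "w a = lmul E c (w j)" using X2 aS ab j by blast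
    have pj: "prv E S' u a = X j" using U2 ab j by auto
    have "s \<le> j" using j sS ab by auto
    then have isj: "istr E (X j)" using X1 j ab by auto
    have "u a = lmul E (\<psi> {a, b}) (prv E S' u a)" using inv ab by blast
    then have "lmul E c (X j) = lmul E (\<psi> {a, b}) (X j)" using pj c ab by (simp add: u_def)
    then have "c = \<psi> {a, b}" using letter_cancel[OF isj] by blast
    moreover have "prv E S w a = w j" using j by (intro prv_pred[OF fin]) auto
    ultimately show "w a = lmul E (\<psi> {a, b}) (prv E S w a) \<and> E i (\<psi> {a, b})"
      using c E(1) by (auto dest: sympD)
  qed
  have srS': "s \<notin> S'" "r \<notin> S'" by (auto simp: S'_def)
  have srn: "{s, r} \<notin> \<sigma>" using inS' srS' by blast
  define \<pi> where "\<pi> = insert {s, r} \<sigma>"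
  define \<phi>0 where "\<phi>0 = \<psi>({s, r} := i)"
  have ppi: "pair_partition S \<pi>"
  proof -
    have "disjnt {s, r} (\<Union>\<sigma>)" using Un srS' by (auto simp: disjnt_def)
    moreover have "partition_on (S - {s, r}) \<sigma>" using pp by (simp add: pair_partition_def S'_def)
    ultimately have "partition_on S \<pi>" using sS rS by (simp add: partition_on_insert \<pi>_def)
    moreover have "card {s, r} = 2" using sS by simp
    ultimately show ?thesis using pp by (auto simp: pair_partition_def \<pi>_def)
  qed
  have dbl: "\<And>a b c d :: nat. {a, b} = {c, d} \<Longrightarrow> a < b \<Longrightarrow> c < d \<Longrightarrow> a = c \<and> b = d"
  proof -
    fix a b c d :: nat assume h: "{a, b} = {c, d}" "a < b" "c < d"
    then have "(a = c \<and> b = d) \<or> (a = d \<and> b = c)" by (simp add: doubleton_eq_iff)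
    then show "a = c \<and> b = d" using h(2,3) by auto
  qed
  have crossing_sr: "\<And>C. C \<in> \<sigma> \<Longrightarrow> crosses {s, r} C \<or> crosses C {s, r} \<Longrightarrow> E i (\<psi> C)"
  proof -
    fix C assume C: "C \<in> \<sigma>" "crosses {s, r} C \<or> crosses C {s, r}"
    then consider "crosses {s, r} C" | "crosses C {s, r}" by blast
    then show "E i (\<psi> C)"
    proof cases
      case 1
      then obtain u1 v1 u2 v2 where cr: "{s, r} = {u1, v1}" "C = {u2, v2}" "u1 < u2" "u2 < v1" "v1 < v2"
        unfolding crosses_def by blast
      have "u1 < v1" using cr by simp
      then have "s = u1 \<and> r = v1" using dbl[OF cr(1) sS(2)] by blast
      moreover have "u2 < v2" using cr by simp
      ultimately show ?thesis using openers[rule_format, of u2 v2] cr C by auto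
    next
      case 2
      then obtain u1 v1 u2 v2 where cr: "C = {u1, v1}" "{s, r} = {u2, v2}" "u1 < u2" "u2 < v1" "v1 < v2"
        unfolding crosses_def by blast
      have "u2 < v2" using cr by simp
      then have "s = u2 \<and> r = v2" using dbl[OF cr(2) sS(2)] by blast
      moreover have "u1 < v1" using cr by simp
      ultimately have "r < v1" using closers[rule_format, of u1 v1] cr C by auto
      then show ?thesis using cr \<open>s = u2 \<and> r = v2\<close> by simp
    qed
  qed
  have nocross: "\<not> crosses B B" for B
  proof
    assume "crosses B B"
    then obtain u1 v1 u2 v2 where cr: "B = {u1, v1}" "B = {u2, v2}" "u1 < u2" "u2 < v1" "v1 < v2"
      unfolding crosses_def by blast
    have "u1 < v1" "u2 < v2" using cr by simp_all
    then have "u1 = u2" using dbl[of u1 v1 u2 v2] cr by simp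
    then show False using cr by simp
  qed
  have homp: "is_hom L E \<pi> \<phi>0"
    unfolding is_hom_def
  proof (intro conjI allI impI ballI)
    fix B assume "B \<in> \<pi>" then show "\<phi>0 B \<in> {1..L}"
      using hom i srn by (auto simp: \<pi>_def \<phi>0_def is_hom_def)
  next
    fix B C assume F: "F_edge \<pi> B C"
    then have BC: "B \<in> \<pi>" "C \<in> \<pi>" "crosses B C \<or> crosses C B" by (auto simp: F_edge_def)
    show "E (\<phi>0 B) (\<phi>0 C)"
    proof (cases "B = {s, r}")
      case True
      then have "C \<noteq> {s, r}" using BC nocross by blast
      then have "C \<in> \<sigma>" using BC by (simp add: \<pi>_def)
      then show ?thesis using True crossing_sr BC \<open>C \<noteq> {s, r}\<close> by (auto simp: \<phi>0_def)
    next
      case False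
      then have B\<sigma>: "B \<in> \<sigma>" using BC by (simp add: \<pi>_def)
      show ?thesis
      proof (cases "C = {s, r}")
        case True
        then have "E i (\<psi> B)" using crossing_sr B\<sigma> BC by blast
        then show ?thesis using True False E(1) by (auto simp: \<phi>0_def dest: sympD)
      next
        case False
        then have "C \<in> \<sigma>" using BC by (simp add: \<pi>_def)
        then have "F_edge \<sigma> B C" using B\<sigma> BC by (simp add: F_edge_def)
        then show ?thesis using hom False \<open>B \<noteq> {s, r}\<close> by (simp add: is_hom_def \<phi>0_def)
      qed
    qed
  qed
  have minr: "Min {b. \<exists>a. a < b \<and> {a, b} \<in> \<pi>} = r"
  proof (rule Min_eqI)
    have "{b. \<exists>a. a < b \<and> {a, b} \<in> \<pi>} \<subseteq> S" using ppi
      by (auto simp: pair_partition_def partition_on_def)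
    then show "finite {b. \<exists>a. a < b \<and> {a, b} \<in> \<pi>}" using fin by (rule finite_subset)
    show "r \<in> {b. \<exists>a. a < b \<and> {a, b} \<in> \<pi>}" using sS by (auto simp: \<pi>_def)
    fix y assume "y \<in> {b. \<exists>a. a < b \<and> {a, b} \<in> \<pi>}"
    then obtain a where a: "a < y" "{a, y} \<in> \<pi>" by blast
    show "r \<le> y"
    proof (cases "{a, y} = {s, r}")
      case True then show ?thesis using dbl[OF True a(1) sS(2)] by simp
    next
      case False then show ?thesis using a closers by (auto simp: \<pi>_def intro: less_imp_le)
    qed
  qed
  have thes: "(THE a. a < r \<and> {a, r} \<in> \<pi>) = s"
  proof (rule the_equality)
    show "s < r \<and> {s, r} \<in> \<pi>" using sS by (simp add: \<pi>_def)
    fix a assume a: "a < r \<and> {a, r} \<in> \<pi>"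
    show "a = s"
    proof (cases "{a, r} = {s, r}")
      case True then show ?thesis using dbl[OF True _ sS(2)] a by simp
    next
      case False then have "{a, r} \<in> \<sigma>" using a by (simp add: \<pi>_def)
      then show ?thesis using inS' srS' by blast
    qed
  qed
  have sig: "\<pi> - {{s, r}} = \<sigma>" using srn by (auto simp: \<pi>_def)
  have Phi_ok: "\<forall>\<phi>. (\<forall>B\<in>\<pi>. \<phi> B = \<phi>0 B) \<longrightarrow> (\<forall>k\<in>S. PhiF (Suc p) E \<pi> \<phi> k = w k)"
  proof (intro allI impI ballI)
    fix \<phi> k assume ag: "\<forall>B\<in>\<pi>. \<phi> B = \<phi>0 B" and k: "k \<in> S"
    have \<phi>i: "\<phi> {s, r} = i" using ag by (simp add: \<pi>_def \<phi>0_def)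
    have ag2: "\<forall>B\<in>\<sigma>. \<phi> B = \<psi> B" using ag srn by (auto simp: \<pi>_def \<phi>0_def)
    have equ: "\<forall>k\<in>S'. PhiF p E \<sigma> \<phi> k = u k" using phi ag2 by blast
    have pv: "prv E S' (PhiF p E \<sigma> \<phi>) k' = prv E S' u k'" for k'
      using prv_cong[OF finS' equ] .
    have e: "PhiF (Suc p) E \<pi> \<phi> k = (if k < s then PhiF p E \<sigma> \<phi> k else if k = s then lmul E i (prv E S' u s)
     else if k < r then lmul E i (PhiF p E \<sigma> \<phi> k) else if k = r then prv E S' u r else PhiF p E \<sigma> \<phi> k)"
      using PhiF_Suc_conc[OF minr thes, of p E \<phi> k] by (simp add: Let_def sig Un \<phi>i pv)
    consider "k < s" | "k = s" | "s < k \<and> k < r" | "k = r" | "r < k" by linarith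
    then show "PhiF (Suc p) E \<pi> \<phi> k = w k"
    proof cases
      case 1 then show ?thesis using e equ k sS by (simp add: S'_def u_def)
    next
      case 2 then show ?thesis using e U1 sS by simp
    next
      case 3 then show ?thesis using e equ k X1 by (simp add: S'_def u_def)
    next
      case 4 then show ?thesis using e U2r sS by simp
    next
      case 5 then show ?thesis using e equ k sS by (simp add: S'_def u_def)
    qed
  qed
  have inv_ok: "\<forall>a b. a < b \<and> {a, b} \<in> \<pi> \<longrightarrow> w a = lmul E (\<phi>0 {a, b}) (prv E S w a)
          \<and> prv E S w b = lmul E (\<phi>0 {a, b}) (w b)"
  proof (intro allI impI)
    fix a b assume ab: "a < b \<and> {a, b} \<in> \<pi>"
    show "w a = lmul E (\<phi>0 {a, b}) (prv E S w a) \<and> prv E S w b = lmul E (\<phi>0 {a, b}) (w b)"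
    proof (cases "{a, b} = {s, r}")
      case True
      then have "a = s" "b = r" using dbl[OF True _ sS(2)] ab by simp_all
      then show ?thesis using sS i by (simp add: \<phi>0_def)
    next
      case False
      then have ab\<sigma>: "{a, b} \<in> \<sigma>" using ab by (simp add: \<pi>_def)
      have ph: "\<phi>0 {a, b} = \<psi> {a, b}" using False by (simp add: \<phi>0_def)
      have rb: "r < b" using closers ab ab\<sigma> by blast
      have iv: "u a = lmul E (\<psi> {a, b}) (prv E S' u a)" "prv E S' u b = lmul E (\<psi> {a, b}) (u b)"
        using inv ab ab\<sigma> by auto
      have a: "a \<in> S" "a \<noteq> s" "a \<noteq> r" using inS'[OF ab\<sigma>] by (auto simp: S'_def)
      have part2: "prv E S w b = lmul E (\<psi> {a, b}) (w b)"
        using iv(2) U3 rb by (simp add: u_def)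
      consider "a < s" | "s < a \<and> a < r" | "r < a" using a by linarith
      then have "w a = lmul E (\<psi> {a, b}) (prv E S w a)"
      proof cases
        case 1 then show ?thesis using iv(1) U1 sS by (simp add: u_def)
      next
        case 2 then show ?thesis using openers ab ab\<sigma> by blast
      next
        case 3 then show ?thesis using iv(1) U3 sS by (simp add: u_def)
      qed
      then show ?thesis using part2 ph by simp
    qed
  qed
  show ?thesis
    using ppi homp Phi_ok inv_ok unfolding good_def by blast
qed


lemma main_gen:
  assumes E: "symp E" "irreflp E"
  shows "\<forall>S w. gpath L E S w \<and> card S = 2 * p \<longrightarrow> (\<exists>\<pi> \<psi>. good L E p S w \<pi> \<psi>)"
proof (induction p)
  case 0
  show ?case
  proof (intro allI impI)
    fix S w assume h: "gpath L E S w \<and> card S = 2 * 0"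
    then have "S = {}" by (auto simp: gpath_def)
    then have "good L E 0 S w {} (\<lambda>_. 0)"
      by (simp add: good_def pair_partition_def partition_on_empty is_hom_def F_edge_def)
    then show "\<exists>\<pi> \<psi>. good L E 0 S w \<pi> \<psi>" by blast
  qed
next
  case (Suc p)
  show ?case
    using step[OF E] Suc.IH by blast
qed

theorem lemma3p4:
  fixes L p :: nat and E :: "nat \<Rightarrow> nat \<Rightarrow> bool"
  assumes "\<forall>u v. E u v \<longrightarrow> u \<in> {1..L} \<and> v \<in> {1..L}"
    and "symp E" and "irreflp E"
    and "1 \<le> p"
  shows "\<forall>w\<in>paths L E p. \<exists>(\<pi>, \<phi>)\<in>PiSet L E p. Phi p E \<pi> \<phi> = w"
proof
  fix ws assume ws: "ws \<in> paths L E p"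
  have len: "length ws = 2 * p" and setws: "set ws \<subseteq> Tmon L E" and st: "tadj L E (temp E) (ws ! 0)"
    and stp: "\<forall>k. k + 1 < 2 * p \<longrightarrow> tadj L E (ws ! k) (ws ! (k + 1))"
    and en: "ws ! (2 * p - 1) = temp E"
    using ws by (auto simp: paths_def)
  define S where "S = {1..2 * p}"
  define w where "w k = ws ! (k - 1)" for k
  have fin: "finite S" by (simp add: S_def)
  have g: "gpath L E S w"
    unfolding gpath_def
  proof (intro conjI ballI impI)
    show "finite S" by (rule fin)
  next
    fix k assume "k \<in> S"
    then have "k - 1 < length ws" using len by (auto simp: S_def)
    then have "ws ! (k - 1) \<in> Tmon L E" using setws nth_mem by blast
    then show "istr E (w k)" by (simp add: w_def istr_Tmon)
  next
    fix k assume k: "k \<in> S"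
    show "tadj L E (prv E S w k) (w k)"
    proof (cases "k = 1")
      case True
      then have "prv E S w k = temp E" by (intro prv_none) (auto simp: S_def)
      then show ?thesis using st True by (simp add: w_def)
    next
      case False
      then have k2: "2 \<le> k" "k \<le> 2 * p" using k by (auto simp: S_def)
      have "prv E S w k = w (k - 1)" using k2 by (intro prv_pred[OF fin]) (auto simp: S_def)
      moreover have "tadj L E (ws ! (k - 2)) (ws ! (k - 2 + 1))" using stp k2 by auto
      moreover have "k - 2 + 1 = k - 1" "k - 1 - 1 = k - 2" using k2 by auto
      ultimately show ?thesis by (simp add: w_def)
    qed
  next
    assume "S \<noteq> {}"
    have "Max S = 2 * p" using assms(4) by (intro Max_eqI) (auto simp: S_def)
    then show "w (Max S) = temp E" using en by (simp add: w_def)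
  qed
  have "card S = 2 * p" by (simp add: S_def)
  then obtain \<pi> \<psi> where gd: "good L E p S w \<pi> \<psi>" using main_gen[OF assms(2,3)] g by blast
  then have pi: "(\<pi>, \<psi>) \<in> PiSet L E p" by (simp add: good_def PiSet_def S_def)
  have "\<forall>k\<in>S. PhiF p E \<pi> \<psi> k = w k" using gd by (simp add: good_def)
  then have phw: "\<And>n. n < 2 * p \<Longrightarrow> PhiF p E \<pi> \<psi> (Suc n) = ws ! n"
    by (auto simp: S_def w_def)
  have "Phi p E \<pi> \<psi> = ws"
    unfolding Phi_def
  proof (rule nth_equalityI)
    show "length (map (PhiF p E \<pi> \<psi>) [1..<2 * p + 1]) = length ws" using len by simp
    fix n assume "n < length (map (PhiF p E \<pi> \<psi>) [1..<2 * p + 1])"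
    then have n: "n < 2 * p" by (simp del: upt_Suc)
    then have "[1..<2 * p + 1] ! n = Suc n" by (subst nth_upt) auto
    then show "map (PhiF p E \<pi> \<psi>) [1..<2 * p + 1] ! n = ws ! n" using n phw by (simp del: upt_Suc)
  qed
  then show "\<exists>(\<pi>, \<phi>)\<in>PiSet L E p. Phi p E \<pi> \<phi> = ws" using pi by blast
qed

end
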